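(* Let $\Delta\ge2$ be an integer and for $\alpha\in(0,1)$ set $f_\alpha(r,s)=\dfrac{2r^\alpha}{r^\alpha+(\Delta-1)s^\alpha}$ for $r,s>0$. There exists $\varepsilon_0>0$ such that for every $\varepsilon\in(0,\varepsilon_0)$, with $\alpha=1/2+\varepsilon$, and all $0<a<2/\Delta<b<2$, we have $f_\alpha(a,b)>a$ or $f_\alpha(b,a)<b$. *)

theory Defs
  imports Complex_Main
begin

definition f_alpha :: "nat \<Rightarrow> real \<Rightarrow> real \<Rightarrow> real \<Rightarrow> real" where
  "f_alpha \<Delta> \<alpha> r s = 2 * r powr \<alpha> / (r powr \<alpha> + (real \<Delta> - 1) * s powr \<alpha>)"

end

theory Submission
  imports Defs "HOL-Analysis.Analysis"
begin

lemma key: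
  fixes D :: nat and e a b :: real
  assumes D: "D \<ge> 2" and e: "0 < e" "e < 1 / (2 * real D ^ 2)"
    and ab: "0 < a" "a < b" "b < 2"
    and A: "f_alpha D (1/2 + e) a b \<le> a"
    and B: "f_alpha D (1/2 + e) b a \<ge> b"
  shows False
proof -
  define al where "al = 1/2 + e"
  define k where "k = real D - 1"
  define r where "r = b / a"
  define be where "be = 2 * e"
  have Dr: "real D \<ge> 2" using D by simp
  have k1: "k \<ge> 1" using Dr k_def by simp
  have e8: "e < 1/8"
  proof -
    have "2 * real D ^ 2 \<ge> 8" proof -
      have "real D ^ 2 \<ge> 2 ^ 2" using Dr by (intro power_mono) auto
      thus ?thesis by simp
    qed
    hence "1 / (2 * real D ^ 2) \<le> 1/8" by (simp add: divide_simps)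
    thus ?thesis using e by simp
  qed
  have r1: "r > 1" using ab r_def by simp
  have br: "b = a * r" using ab r_def by simp
  define s where "s = r powr (1 - al)"
  define t where "t = r powr be"
  have al_eq: "al = (1 - al) + be" unfolding al_def be_def by simp
  have ra: "r powr al = s * t" unfolding s_def t_def
    by (subst al_eq) (simp add: powr_add)
  have s1: "s \<ge> 1" unfolding s_def using r1 al_def e8 by (intro ge_one_powr_ge_zero) auto
  have t1: "t \<ge> 1" unfolding t_def using r1 be_def e by (intro ge_one_powr_ge_zero) auto
  have rs: "r = s * r powr al" unfolding s_def
    using r1 by (simp flip: powr_add)
  have ba: "b powr al = a powr al * r powr al" using br ab r1 by (simp add: powr_mult)
  have apos: "a powr al > 0" using ab by simp
  have rapos: "r powr al > 0" using r1 by simp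
  have A1: "2 * a powr al \<le> a * (a powr al + k * b powr al)"
  proof -
    have den: "a powr al + k * b powr al > 0" using ab k1 by (simp add: add_pos_nonneg)
    show ?thesis using A den unfolding f_alpha_def al_def[symmetric] k_def[symmetric]
      by (simp add: divide_simps)
  qed
  hence "2 * a powr al \<le> a powr al * (a * (1 + k * r powr al))" unfolding ba
    by (simp add: algebra_simps)
  hence A2: "2 \<le> a * (1 + k * r powr al)" using apos by simp
  have B1: "2 * b powr al \<ge> b * (b powr al + k * a powr al)"
  proof -
    have den: "b powr al + k * a powr al > 0" using ab k1 by (simp add: add_pos_nonneg)
    show ?thesis using B den unfolding f_alpha_def al_def[symmetric] k_def[symmetric]
      by (simp add: divide_simps)
  qed
  hence "a powr al * (2 * r powr al) \<ge> a powr al * (a * r * (r powr al + k))"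
    unfolding ba by (simp add: br algebra_simps)
  hence "2 * r powr al \<ge> a * r * (r powr al + k)" using apos by simp
  hence "2 * r powr al \<ge> r powr al * (a * (r + k * s))" using rs
    by (simp add: algebra_simps)
  hence B2: "2 \<ge> a * (r + k * s)" using rapos by simp
  have "r < 1 + k * r powr al"
  proof -
    have "a * r < 2" using br ab by simp
    hence "a * r < a * (1 + k * r powr al)" using A2 by simp
    thus ?thesis using ab by simp
  qed
  also have "\<dots> \<le> r powr al + k * r powr al"
  proof -
    have "1 \<le> r powr al" using r1 al_def e by (intro ge_one_powr_ge_zero) auto
    thus ?thesis by simp
  qed
  finally have "s * r powr al < real D * r powr al" using rs k_def by (simp add: algebra_simps)
  hence sD: "s < real D" using rapos by simp
  \<comment> \<open>Bernoulli\<close>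
  have tb: "t \<le> 1 + be * (r - 1)"
  proof -
    have "r powr be * 1 powr (1 - be) \<le> be * r + (1 - be) * 1"
      by (rule Youngs_inequality_0) (use e e8 be_def r1 in auto)
    thus ?thesis unfolding t_def by (simp add: algebra_simps)
  qed
  have "a * (r + k * s) \<le> a * (1 + k * (s * t))" using A2 B2 ra by simp
  hence "r + k * s \<le> 1 + k * (s * t)" using ab by simp
  hence main: "r - 1 \<le> k * s * (t - 1)" by (simp add: algebra_simps)
  also have "\<dots> \<le> k * s * (be * (r - 1))"
    using tb k1 s1 by (intro mult_left_mono) auto
  also have "\<dots> < r - 1"
  proof -
    have "k * s * be \<le> real D * real D * be"
      using k_def sD k1 s1 be_def e by (intro mult_right_mono mult_mono) auto
    also have "\<dots> < 1" using e be_def Dr by (simp add: power2_eq_square field_simps)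
    finally have "k * s * be < 1" .
    thus ?thesis using r1 by (simp add: mult.assoc[symmetric])
  qed
  finally show False by simp
qed

theorem mainTheorem9:
  fixes \<Delta> :: nat
  assumes "\<Delta> \<ge> 2"
  shows "\<exists>\<epsilon>0>0. \<epsilon>0 \<le> 1/2 \<and> (\<forall>\<epsilon>. 0 < \<epsilon> \<and> \<epsilon> < \<epsilon>0 \<longrightarrow>
           (\<forall>a b :: real. 0 < a \<and> a < 2 / real \<Delta> \<and> 2 / real \<Delta> < b \<and> b < 2 \<longrightarrow>
              f_alpha \<Delta> (1/2 + \<epsilon>) a b > a \<or> f_alpha \<Delta> (1/2 + \<epsilon>) b a < b))"
proof (intro exI[of _ "1 / (2 * real \<Delta> ^ 2)"] conjI allI impI)
  have Dr: "real \<Delta> \<ge> 2" using assms by simp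
  show "0 < 1 / (2 * real \<Delta> ^ 2)" using Dr by simp
  have "2 * real \<Delta> ^ 2 \<ge> 2" proof -
    have "real \<Delta> ^ 2 \<ge> 2 ^ 2" using Dr by (intro power_mono) auto
    thus ?thesis by simp
  qed
  thus "1 / (2 * real \<Delta> ^ 2) \<le> 1/2" by (simp add: divide_simps)
  fix e a b :: real
  assume e: "0 < e \<and> e < 1 / (2 * real \<Delta> ^ 2)"
    and ab: "0 < a \<and> a < 2 / real \<Delta> \<and> 2 / real \<Delta> < b \<and> b < 2"
  show "f_alpha \<Delta> (1/2 + e) a b > a \<or> f_alpha \<Delta> (1/2 + e) b a < b"
  proof (rule ccontr)
    assume "\<not> ?thesis"
    thus False using key[OF assms, of e a b] e ab by auto
  qed
qed

end
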